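(* Let $K\ge L\ge T\ge 2$ be integers and let $(q,\boldsymbol{\alpha}^{(p)},\boldsymbol{\alpha}^{(s)},\boldsymbol{\beta}^{(p)},\boldsymbol{\beta}^{(s)})$ be the tuple $\mathrm{CAT}_x(K,L,T)$ described in the context, for any positive integer $x$ coprime to $q$. Then this tuple is a cyclic-addition degree table (CAT) for parameters $K,L,T$ with number of unique entries $$N=(K+1)(L+1)+(T-1)^2+\kappa+\lambda .$$
   Context: Construction $\mathrm{CAT}_x$: Let $K\ge L\ge T\ge 2$ be integers. Let $\kappa,\lambda$ be the smallest non-negative integers such that $K+1+\kappa$ and $L+1+\lambda$ are coprime to $T-1$. Put $K^\star=K+1+\kappa$, $L^\star=L+1+\lambda$, $\bar T=T-1$ and $q=K^\star L^\star+\bar T^2$. Let $x$ be a positive integer coprime to $q$ and let $y\in\{0,\dots,q-1\}$ be the (unique) integer with $x\bar T+yK^\star\equiv 0\pmod q$. Define vectors over $\mathbb{Z}_q$ (integers mod $q$): $\boldsymbol{\alpha}^{(p)}=(0,y,2y,\dots,(K-1)y)\bmod q\in\mathbb{Z}_q^K$, $\boldsymbol{\alpha}^{(s)}=(Ky,\;Ky+x,\;\dots,\;Ky+(T-1)x)\bmod q\in\mathbb{Z}_q^T$, $\boldsymbol{\beta}^{(p)}=(0,x,2x,\dots,(L-1)x)\bmod q\in\mathbb{Z}_q^L$, $\boldsymbol{\beta}^{(s)}=(-x,\;y-x,\;\dots,\;(T-1)y-x)\bmod q\in\mathbb{Z}_q^T$. Definition (CAT). For a positive integer $q$ and vectors $\boldsymbol{\alpha}^{(p)}\in\mathbb{Z}_q^K,\boldsymbol{\alpha}^{(s)}\in\mathbb{Z}_q^T,\boldsymbol{\beta}^{(p)}\in\mathbb{Z}_q^L,\boldsymbol{\beta}^{(s)}\in\mathbb{Z}_q^T$,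 write $\{\mathbf v\}$ for the set of entries of a vector $\mathbf v$ and let (all additions in $\mathbb{Z}_q$) $\mathcal{TL}=\{\boldsymbol{\alpha}^{(p)}\}+\{\boldsymbol{\beta}^{(p)}\}$, $\mathcal{TR}=\{\boldsymbol{\alpha}^{(p)}\}+\{\boldsymbol{\beta}^{(s)}\}$, $\mathcal{BL}=\{\boldsymbol{\alpha}^{(s)}\}+\{\boldsymbol{\beta}^{(p)}\}$, $\mathcal{BR}=\{\boldsymbol{\alpha}^{(s)}\}+\{\boldsymbol{\beta}^{(s)}\}$ (sumsets $\mathcal A+\mathcal B=\{a+b: a\in\mathcal A,b\in\mathcal B\}$), and let $\boldsymbol\gamma$ be the vector listing the elements of $\mathcal{TL}\cup\mathcal{TR}\cup\mathcal{BL}\cup\mathcal{BR}$ in ascending order (identifying $\mathbb{Z}_q$ with $\{0,\dots,q-1\}$). For a vector $\boldsymbol\rho$ of length $n$ of $q$-th roots of unity in a field and a vector $\boldsymbol\delta$ of length $m$ with entries in $\mathbb{Z}_q$, $\mathbf V(\boldsymbol\rho,\boldsymbol\delta)$ is the $n\times m$ matrix with $(i,j)$ entry $\rho_i^{\delta_j}$. The tuple $(q,\boldsymbol{\alpha}^{(p)},\boldsymbol{\alpha}^{(s)},\boldsymbol{\beta}^{(p)},\boldsymbol{\beta}^{(s)})$ is a cyclic-addition degree table for parameters $K,L,T$ with $N$ unique entries if: (I) $|\mathcal{TL}\cup\mathcal{TR}\cup\mathcal{BL}\cup\mathcal{BR}|=N$; (II) $|\mathcal{TL}|=KL$; (III)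 $\mathcal{TL}\cap\mathcal{TR}=\mathcal{TL}\cap\mathcal{BL}=\mathcal{TL}\cap\mathcal{BR}=\emptyset$; (IV) in every prime field $\mathbb{F}_p$ with $q\mid p-1$ there exist $N$ $q$-th roots of unity $\boldsymbol\rho=(\rho_1,\dots,\rho_N)$ such that (a) $\mathbf V(\boldsymbol\rho,\boldsymbol\gamma)$ is invertible and (b) all $T\times T$ submatrices of $\mathbf V(\boldsymbol\rho,\boldsymbol{\alpha}^{(s)})$ and of $\mathbf V(\boldsymbol\rho,\boldsymbol{\beta}^{(s)})$ are invertible. *)

theory Defs
  imports "Berlekamp_Zassenhaus.Finite_Field" "Jordan_Normal_Form.Matrix"
    "Jordan_Normal_Form.DL_Submatrix" "HOL-Number_Theory.Cong"
begin

(* Elements of Z_q are represented by naturals in {0..<q}; vectors by lists. *)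

definition sumset_mod :: "nat \<Rightarrow> nat set \<Rightarrow> nat set \<Rightarrow> nat set" where
  "sumset_mod q A B = {(a + b) mod q | a b. a \<in> A \<and> b \<in> B}"

definition cat_TL :: "nat \<Rightarrow> nat list \<Rightarrow> nat list \<Rightarrow> nat list \<Rightarrow> nat list \<Rightarrow> nat set" where
  "cat_TL q ap as bp bs = sumset_mod q (set ap) (set bp)"
definition cat_TR :: "nat \<Rightarrow> nat list \<Rightarrow> nat list \<Rightarrow> nat list \<Rightarrow> nat list \<Rightarrow> nat set" where
  "cat_TR q ap as bp bs = sumset_mod q (set ap) (set bs)"
definition cat_BL :: "nat \<Rightarrow> nat list \<Rightarrow> nat list \<Rightarrow> nat list \<Rightarrow> nat list \<Rightarrow> nat set" where
  "cat_BL q ap as bp bs = sumset_mod q (set as) (set bp)"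
definition cat_BR :: "nat \<Rightarrow> nat list \<Rightarrow> nat list \<Rightarrow> nat list \<Rightarrow> nat list \<Rightarrow> nat set" where
  "cat_BR q ap as bp bs = sumset_mod q (set as) (set bs)"

definition cat_all :: "nat \<Rightarrow> nat list \<Rightarrow> nat list \<Rightarrow> nat list \<Rightarrow> nat list \<Rightarrow> nat set" where
  "cat_all q ap as bp bs = cat_TL q ap as bp bs \<union> cat_TR q ap as bp bs
      \<union> cat_BL q ap as bp bs \<union> cat_BR q ap as bp bs"

definition cat_gamma :: "nat \<Rightarrow> nat list \<Rightarrow> nat list \<Rightarrow> nat list \<Rightarrow> nat list \<Rightarrow> nat list" where
  "cat_gamma q ap as bp bs = sorted_list_of_set (cat_all q ap as bp bs)"

definition vmat :: "'a::field list \<Rightarrow> nat list \<Rightarrow> 'a mat" where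
  "vmat \<rho> \<delta> = mat (length \<rho>) (length \<delta>) (\<lambda>(i, j). (\<rho> ! i) ^ (\<delta> ! j))"

definition all_TxT_invertible :: "nat \<Rightarrow> 'a::field mat \<Rightarrow> bool" where
  "all_TxT_invertible T A \<longleftrightarrow>
     (\<forall>I J. I \<subseteq> {0..<dim_row A} \<longrightarrow> J \<subseteq> {0..<dim_col A} \<longrightarrow> card I = T \<longrightarrow> card J = T
        \<longrightarrow> invertible_mat (submatrix A I J))"

(* Condition (IV) for one particular field 'a (instantiated with the prime field F_p) *)
definition cat_cond_IV :: "'a::field itself \<Rightarrow> nat \<Rightarrow> nat list \<Rightarrow> nat list \<Rightarrow> nat list \<Rightarrow> nat list
    \<Rightarrow> nat \<Rightarrow> nat \<Rightarrow> bool" where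
  "cat_cond_IV _ q ap as bp bs T N \<longleftrightarrow>
     (\<exists>\<rho> :: 'a list. length \<rho> = N \<and> (\<forall>r\<in>set \<rho>. r ^ q = 1)
        \<and> invertible_mat (vmat \<rho> (cat_gamma q ap as bp bs))
        \<and> all_TxT_invertible T (vmat \<rho> as)
        \<and> all_TxT_invertible T (vmat \<rho> bs))"

definition cat_cond_I_III :: "nat \<Rightarrow> nat list \<Rightarrow> nat list \<Rightarrow> nat list \<Rightarrow> nat list
    \<Rightarrow> nat \<Rightarrow> nat \<Rightarrow> nat \<Rightarrow> nat \<Rightarrow> bool" where
  "cat_cond_I_III q ap as bp bs K L T N \<longleftrightarrow>
     length ap = K \<and> length as = T \<and> length bp = L \<and> length bs = T
     \<and> (\<forall>v\<in>set ap \<union> set as \<union> set bp \<union> set bs. v < q)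
     \<and> card (cat_all q ap as bp bs) = N
     \<and> card (cat_TL q ap as bp bs) = K * L
     \<and> cat_TL q ap as bp bs \<inter> cat_TR q ap as bp bs = {}
     \<and> cat_TL q ap as bp bs \<inter> cat_BL q ap as bp bs = {}
     \<and> cat_TL q ap as bp bs \<inter> cat_BR q ap as bp bs = {}"

definition cat_kappa :: "nat \<Rightarrow> nat \<Rightarrow> nat" where
  "cat_kappa K T = (LEAST k. coprime (K + 1 + k) (T - 1))"
definition cat_lambda :: "nat \<Rightarrow> nat \<Rightarrow> nat" where
  "cat_lambda L T = (LEAST l. coprime (L + 1 + l) (T - 1))"
definition cat_Kstar :: "nat \<Rightarrow> nat \<Rightarrow> nat" where
  "cat_Kstar K T = K + 1 + cat_kappa K T"
definition cat_Lstar :: "nat \<Rightarrow> nat \<Rightarrow> nat" where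
  "cat_Lstar L T = L + 1 + cat_lambda L T"
definition cat_q :: "nat \<Rightarrow> nat \<Rightarrow> nat \<Rightarrow> nat" where
  "cat_q K L T = cat_Kstar K T * cat_Lstar L T + (T - 1)^2"
definition cat_y :: "nat \<Rightarrow> nat \<Rightarrow> nat \<Rightarrow> nat \<Rightarrow> nat" where
  "cat_y K L T x = (THE y. y < cat_q K L T \<and>
      [x * (T - 1) + y * cat_Kstar K T = 0] (mod cat_q K L T))"

definition cat_alpha_p :: "nat \<Rightarrow> nat \<Rightarrow> nat \<Rightarrow> nat \<Rightarrow> nat list" where
  "cat_alpha_p K L T x = map (\<lambda>i. (i * cat_y K L T x) mod cat_q K L T) [0..<K]"
definition cat_alpha_s :: "nat \<Rightarrow> nat \<Rightarrow> nat \<Rightarrow> nat \<Rightarrow> nat list" where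
  "cat_alpha_s K L T x = map (\<lambda>i. (K * cat_y K L T x + i * x) mod cat_q K L T) [0..<T]"
definition cat_beta_p :: "nat \<Rightarrow> nat \<Rightarrow> nat \<Rightarrow> nat \<Rightarrow> nat list" where
  "cat_beta_p K L T x = map (\<lambda>i. (i * x) mod cat_q K L T) [0..<L]"
definition cat_beta_s :: "nat \<Rightarrow> nat \<Rightarrow> nat \<Rightarrow> nat \<Rightarrow> nat list" where
  "cat_beta_s K L T x = map (\<lambda>i. nat ((int i * int (cat_y K L T x) - int x) mod int (cat_q K L T))) [0..<T]"

end

theory Submission
  imports Defs "HOL-Computational_Algebra.Polynomial" "Jordan_Normal_Form.Determinant"
begin

lemma least_coprime_bound:
  fixes K t :: nat
  assumes t: "1 \<le> t"
  shows "coprime (K + 1 + (LEAST k. coprime (K + 1 + k) t)) t \<and> (LEAST k. coprime (K + 1 + k) t) < t"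
proof -
  define k0 where "k0 = (t - K mod t) mod t"
  have k0t: "k0 < t" unfolding k0_def using t by simp
  have "[K + 1 + k0 = 1] (mod t)"
  proof (cases "K mod t = 0")
    case True
    then have "k0 = 0" unfolding k0_def by simp
    have "K + 1 + k0 = (K div t) * t + 1"
      using \<open>k0 = 0\<close> True div_mult_mod_eq[of K t] by simp
    then show ?thesis unfolding cong_def using mod_mult_self3[of "K div t" t 1] by simp
  next
    case False
    have r: "K mod t < t" using t by simp
    then have k0: "k0 = t - K mod t" unfolding k0_def using False
      by (intro mod_less) linarith
    have "K + 1 + k0 = (K div t + 1) * t + 1"
    proof -
      have e: "K div t * t + K mod t = K" by (rule div_mult_mod_eq)
      have d: "(K div t + 1) * t = K div t * t + t" by (simp add: distrib_right)
      show ?thesis unfolding d using k0 r e by linarith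
    qed
    then show ?thesis unfolding cong_def using mod_mult_self3[of "K div t + 1" t 1] by simp
  qed
  then have c0: "coprime (K + 1 + k0) t" using cong_imp_coprime[of 1 "K+1+k0" t]
    by (simp add: cong_sym)
  have "coprime (K + 1 + (LEAST k. coprime (K + 1 + k) t)) t" by (rule LeastI[of _ k0]) (rule c0)
  moreover have "(LEAST k. coprime (K + 1 + k) t) \<le> k0" by (rule Least_le) (rule c0)
  ultimately show ?thesis using k0t by simp
qed

lemma det_ne0_invertible:
  assumes A: "A \<in> carrier_mat n n" and d: "det A \<noteq> (0::'a::field)"
  shows "invertible_mat A"
proof -
  from det_non_zero_imp_unit[OF A d, of "()"] obtain B where
    B: "B \<in> carrier_mat n n" "B * A = 1\<^sub>m n" "A * B = 1\<^sub>m n"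
    unfolding Units_def ring_mat_def by auto
  then show ?thesis using A unfolding invertible_mat_def inverts_mat_def square_mat.simps
    by (metis carrier_matD(1) carrier_matD(2))
qed

lemma det_scaled_vandermonde:
  fixes A :: "'a::field mat"
  assumes A: "A \<in> carrier_mat n n"
    and e: "\<And>i j. i < n \<Longrightarrow> j < n \<Longrightarrow> A $$ (i,j) = c i * z i ^ j"
    and c: "\<And>i. i < n \<Longrightarrow> c i \<noteq> 0" and inj: "inj_on z {..<n}"
  shows "det A \<noteq> 0"
proof
  assume "det A = 0"
  then obtain v where v: "v \<in> carrier_vec n" "v \<noteq> 0\<^sub>v n" "A *\<^sub>v v = 0\<^sub>v n"
    using det_0_iff_vec_prod_zero_field[OF A] by auto
  define p where "p = (\<Sum>j<n. monom (v $ j) j)"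
  have coeff: "coeff p k = (if k < n then v $ k else 0)" for k
    unfolding p_def coeff_sum coeff_monom by (simp add: sum.delta)
  obtain k where k: "k < n" "v $ k \<noteq> 0"
    using v(1,2) by (metis carrier_vecD eq_vecI index_zero_vec(1) index_zero_vec(2))
  have p0: "p \<noteq> 0" using coeff[of k] k by auto
  have deg: "degree p < n"
  proof -
    have "degree p \<le> n - 1" by (rule degree_le) (use coeff in auto)
    then show ?thesis using k by linarith
  qed
  have roots: "z ` {..<n} \<subseteq> {x. poly p x = 0}"
  proof clarify
    fix i assume i: "i < n"
    have "0 = (A *\<^sub>v v) $ i" using v(3) i by simp
    also have "\<dots> = (\<Sum>j<n. A $$ (i,j) * v $ j)"
      using A v(1) i by (auto simp: scalar_prod_def atLeast0LessThan intro!: sum.cong)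
    also have "\<dots> = c i * (\<Sum>j<n. v $ j * z i ^ j)"
      using e[OF i] by (simp add: sum_distrib_left mult_ac)
    finally have "(\<Sum>j<n. v $ j * z i ^ j) = 0" using c[OF i] by simp
    then show "poly p (z i) = 0" unfolding p_def by (simp add: poly_sum poly_monom)
  qed
  have "n = card (z ` {..<n})" using inj by (simp add: card_image)
  also have "\<dots> \<le> card {x. poly p x = 0}"
    by (rule card_mono[OF poly_roots_finite[OF p0] roots])
  also have "\<dots> \<le> degree p" by (rule card_poly_roots_bound[OF p0])
  finally show False using deg by simp
qed

lemma exists_gen_vandermonde:
  fixes U :: "'a::field set"
  assumes fin: "finite U"
  shows "distinct es \<Longrightarrow> \<forall>e\<in>set es. e < card U \<Longrightarrow>
     \<exists>\<rho>. length \<rho> = length es \<and> set \<rho> \<subseteq> U \<and> det (vmat \<rho> es) \<noteq> 0"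
proof (induction es rule: rev_induct)
  case Nil
  then show ?case by (intro exI[of _ "[]"]) (simp add: vmat_def det_def)
next
  case (snoc e es)
  define m where "m = length es"
  from snoc obtain \<rho>' where r': "length \<rho>' = m" "set \<rho>' \<subseteq> U" "det (vmat \<rho>' es) \<noteq> 0"
    unfolding m_def by auto
  define ees where "ees = es @ [e]"
  define M where "M r = vmat (\<rho>' @ [r]) ees" for r :: 'a
  have Mc: "M r \<in> carrier_mat (Suc m) (Suc m)" for r
    unfolding M_def vmat_def ees_def using r'(1) m_def by auto
  have Mi: "M r $$ (m,j) = r ^ (ees ! j)" if "j < Suc m" for r j
    unfolding M_def vmat_def ees_def using r'(1) m_def that by (auto simp: nth_append)
  have del: "mat_delete (M r) m j = mat_delete (M 0) m j" for r j
    unfolding mat_delete_def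
    by (rule eq_matI) (auto simp: M_def vmat_def r'(1) m_def nth_append ees_def)
  define c where "c j = cofactor (M 0) m j" for j
  have detM: "det (M r) = (\<Sum>j<Suc m. c j * r ^ (ees ! j))" for r
  proof -
    have "det (M r) = (\<Sum>j<Suc m. M r $$ (m,j) * cofactor (M r) m j)"
      by (rule laplace_expansion_row[OF Mc]) simp
    also have "\<dots> = (\<Sum>j<Suc m. c j * r ^ (ees ! j))"
      by (intro sum.cong refl) (simp add: Mi c_def cofactor_def del[of r])
    finally show ?thesis .
  qed
  have cm: "c m = det (vmat \<rho>' es)"
  proof -
    have "mat_delete (M 0) m m = vmat \<rho>' es"
      unfolding mat_delete_def
      by (rule eq_matI) (auto simp: M_def vmat_def r'(1) m_def nth_append ees_def)
    then show ?thesis unfolding c_def cofactor_def by simp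
  qed
  define p where "p = (\<Sum>j<Suc m. monom (c j) (ees ! j))"
  have polyp: "poly p r = det (M r)" for r
    unfolding p_def detM by (simp add: poly_sum poly_monom)
  have eesj: "ees ! j = e \<longleftrightarrow> j = m" if "j < Suc m" for j
    using snoc.prems(1) that unfolding ees_def m_def
    by (auto simp: nth_append)
  have "coeff p e = (\<Sum>j<Suc m. if j = m then c j else 0)"
    unfolding p_def coeff_sum coeff_monom using eesj by (intro sum.cong) auto
  also have "\<dots> = c m" by simp
  finally have ce: "coeff p e = c m" .
  have p0: "p \<noteq> 0" using ce cm r'(3) by auto
  have cU: "0 < card U" using snoc.prems(2) by auto
  have ees_lt: "ees ! j < card U" if "j < Suc m" for j
    using snoc.prems(2) that unfolding ees_def m_def by (auto simp: nth_append)
  have "degree p \<le> card U - 1"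
  proof (rule degree_le, intro allI impI)
    fix k assume k: "card U - 1 < k"
    show "coeff p k = 0" unfolding p_def coeff_sum coeff_monom
      using ees_lt k by (intro sum.neutral) (auto, fastforce)
  qed
  with cU have deg: "degree p < card U" by linarith
  have "\<not> U \<subseteq> {x. poly p x = 0}"
  proof
    assume "U \<subseteq> {x. poly p x = 0}"
    then have "card U \<le> card {x. poly p x = 0}"
      by (rule card_mono[OF poly_roots_finite[OF p0]])
    also have "\<dots> \<le> degree p" by (rule card_poly_roots_bound[OF p0])
    finally show False using deg by simp
  qed
  then obtain r where r: "r \<in> U" "poly p r \<noteq> 0" by auto
  show ?case
    by (intro exI[of _ "\<rho>' @ [r]"]) (use r r' polyp in \<open>auto simp: M_def ees_def m_def\<close>)
qed

lemma card_roots_le: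
  fixes u :: "'a::field"
  assumes d: "0 < d"
  shows "finite {a. a ^ d = u} \<and> card {a. a ^ d = u} \<le> d"
proof -
  define P where "P = monom (1::'a) d - [:u:]"
  have cP: "coeff P k = (if k = d then 1 else if k = 0 then - u else 0)" for k
    unfolding P_def using d by (auto simp: coeff_monom coeff_pCons split: nat.splits)
  have P0: "P \<noteq> 0" using cP[of d] by auto
  have "degree P \<le> d" by (rule degree_le) (auto simp: cP)
  have eq: "{a. a ^ d = u} = {a. poly P a = 0}" unfolding P_def by (auto simp: poly_monom)
  show ?thesis unfolding eq using poly_roots_finite[OF P0] card_poly_roots_bound[OF P0]
    \<open>degree P \<le> d\<close> by auto
qed

lemma fermat_field:
  fixes a :: "'a::{finite,field}"
  assumes a: "a \<noteq> 0"
  shows "a ^ (CARD('a) - 1) = 1"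
proof -
  define S where "S = (UNIV :: 'a set) - {0}"
  have cS: "card S = CARD('a) - 1" unfolding S_def by (simp add: card_Diff_subset)
  have inj: "inj_on (\<lambda>x. a * x) S" using a by (auto simp: inj_on_def)
  have img: "(\<lambda>x. a * x) ` S = S"
  proof (intro equalityI subsetI)
    fix z assume "z \<in> (\<lambda>x. a * x) ` S" then show "z \<in> S" using a unfolding S_def by auto
  next
    fix z assume z: "z \<in> S"
    have "z = a * (inverse a * z)" using a by (simp add: field_simps)
    moreover have "inverse a * z \<in> S" using a z unfolding S_def by auto
    ultimately show "z \<in> (\<lambda>x. a * x) ` S" by blast
  qed
  have "prod id S = prod id ((\<lambda>x. a * x) ` S)" using img by simp
  also have "\<dots> = prod (\<lambda>x. a * x) S" using prod.reindex[OF inj, of id] by simp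
  also have "\<dots> = a ^ card S * prod id S" by (simp add: prod.distrib)
  finally have "a ^ card S * prod id S = 1 * prod id S" by simp
  moreover have "prod id S \<noteq> 0" unfolding S_def by (simp add: prod_zero_iff)
  ultimately show ?thesis using cS by (metis mult_right_cancel)
qed

lemma card_roots_unity_ge:
  fixes q :: nat
  assumes q0: "0 < q" and qd: "q dvd CARD('p::prime_card) - 1"
  shows "q \<le> card {u::'p mod_ring. u ^ q = 1}"
proof -
  define n where "n = CARD('p)"
  have n2: "2 \<le> n" unfolding n_def using prime_card[where 'a='p] prime_ge_2_nat by blast
  obtain d where nd: "n - 1 = q * d" using qd unfolding n_def by (auto elim: dvdE)
  have d0: "0 < d" using nd n2 by (cases d) auto
  define U where "U = {u::'p mod_ring. u ^ q = 1}"
  have ferm: "a ^ (n - 1) = 1" if "a \<noteq> 0" for a :: "'p mod_ring"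
  proof -
    show ?thesis using fermat_field[OF that] unfolding n_def by simp
  qed
  have sub: "{a::'p mod_ring. a \<noteq> 0} \<subseteq> (\<Union>u\<in>U. {a. a ^ d = u})"
  proof
    fix a :: "'p mod_ring" assume "a \<in> {a. a \<noteq> 0}"
    then have "(a ^ d) ^ q = 1" using ferm[of a] nd by (simp add: power_mult[symmetric] mult.commute)
    then show "a \<in> (\<Union>u\<in>U. {a. a ^ d = u})" unfolding U_def by auto
  qed
  have "n - 1 = card {a::'p mod_ring. a \<noteq> 0}"
  proof -
    have "{a::'p mod_ring. a \<noteq> 0} = UNIV - {0}" by auto
    then show ?thesis unfolding n_def by (simp add: card_Diff_subset)
  qed
  also have "\<dots> \<le> card (\<Union>u\<in>U. {a. a ^ d = u})"
    by (rule card_mono[OF _ sub]) simp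
  also have "\<dots> \<le> (\<Sum>u\<in>U. card {a. a ^ d = u})"
    by (rule card_UN_le) simp
  also have "\<dots> \<le> (\<Sum>u\<in>U. d)"
    by (rule sum_mono) (use card_roots_le[OF d0] in auto)
  also have "\<dots> = card U * d" by simp
  finally have "q * d \<le> card U * d" using nd by simp
  then show ?thesis using d0 unfolding U_def by simp
qed

lemma pow_mod_q: fixes r :: "'a::comm_monoid_mult" assumes "r ^ q = 1" shows "r ^ a = r ^ (a mod q)"
proof -
  have "r ^ a = r ^ (q * (a div q) + a mod q)" by simp
  also have "\<dots> = (r ^ q) ^ (a div q) * r ^ (a mod q)" by (simp only: power_add power_mult)
  finally show ?thesis using assms by simp
qed

lemma pick_initial: "j < T \<Longrightarrow> pick {0..<T} j = j"
proof -
  assume j: "j < T"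
  have "card {a \<in> {0..<T}. a < j} = j"
  proof -
    have "{a \<in> {0..<T}. a < j} = {0..<j}" using j by auto
    then show ?thesis by simp
  qed
  then show ?thesis using pick_card_in_set[of j "{0..<T}"] j by simp
qed

lemma txt_inv:
  fixes \<rho> :: "'a::field list" and q T ee g :: nat and es :: "nat list"
  assumes dist: "distinct \<rho>" and roots: "\<forall>r\<in>set \<rho>. r ^ q = 1" and q0: "0 < q"
    and len: "length es = T"
    and ex: "\<And>j (r::'a). j < T \<Longrightarrow> r ^ q = 1 \<Longrightarrow> r ^ (es ! j) = r ^ ee * (r ^ g) ^ j"
    and cg: "coprime g q"
  shows "all_TxT_invertible T (vmat \<rho> es)"
  unfolding all_TxT_invertible_def
proof (intro allI impI)
  fix I J assume I: "I \<subseteq> {0..<dim_row (vmat \<rho> es)}" and J: "J \<subseteq> {0..<dim_col (vmat \<rho> es)}"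
    and cI: "card I = T" and cJ: "card J = T"
  define n where "n = length \<rho>"
  have dims: "dim_row (vmat \<rho> es) = n" "dim_col (vmat \<rho> es) = T"
    unfolding vmat_def n_def using len by simp_all
  have J0: "J = {0..<T}" using J cJ unfolding dims by (intro card_subset_eq) auto
  have I1: "{i. i < n \<and> i \<in> I} = I" using I dims by auto
  have J1: "{j. j < T \<and> j \<in> J} = J" using J0 by auto
  define S where "S = submatrix (vmat \<rho> es) I J"
  have Sc: "S \<in> carrier_mat T T" unfolding S_def carrier_mat_def
    by (simp add: dim_submatrix dims I1 J1 cI cJ)
  define r where "r i = \<rho> ! pick I i" for i
  have pickI: "pick I i \<in> I" if "i < T" for i using pick_in_set_le[of i I] that cI by simp
  have pickn: "pick I i < n" if "i < T" for i using pickI[OF that] I dims by auto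
  have rq: "r i ^ q = 1" if "i < T" for i
    using roots pickn[OF that] unfolding r_def n_def by auto
  have Sij: "S $$ (i, j) = r i ^ ee * (r i ^ g) ^ j" if "i < T" "j < T" for i j
  proof -
    have "S $$ (i, j) = vmat \<rho> es $$ (pick I i, pick J j)"
      unfolding S_def using that by (intro submatrix_index) (simp_all add: dims I1 J1 cI cJ)
    also have "\<dots> = r i ^ (es ! j)"
      unfolding vmat_def r_def J0 pick_initial[OF that(2)] using pickn[OF that(1)] that(2) len n_def
      by simp
    also have "\<dots> = r i ^ ee * (r i ^ g) ^ j" using ex[OF that(2) rq[OF that(1)]] .
    finally show ?thesis .
  qed
  have c0: "r i ^ ee \<noteq> 0" if "i < T" for i
  proof -
    have "r i \<noteq> 0" using rq[OF that] q0 by (cases "r i = 0") (simp_all add: power_0_left)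
    then show ?thesis by simp
  qed
  obtain u where u: "[g * u = 1] (mod q)" using cong_solve_coprime_nat[OF cg] by auto
  have inj: "inj_on (\<lambda>i. r i ^ g) {..<T}"
  proof (rule inj_onI)
    fix i i' assume i: "i \<in> {..<T}" and i': "i' \<in> {..<T}" and e: "r i ^ g = r i' ^ g"
    have bk: "(r k ^ g) ^ u = r k" if "k < T" for k
    proof -
      have "(r k ^ g) ^ u = r k ^ (g * u)" by (simp add: power_mult)
      also have "\<dots> = r k ^ ((g * u) mod q)" by (rule pow_mod_q[OF rq[OF that]])
      also have "\<dots> = r k ^ (1 mod q)" using u unfolding cong_def by simp
      also have "\<dots> = r k" using pow_mod_q[OF rq[OF that], of 1] by simp
      finally show ?thesis .
    qed
    have "r i = (r i ^ g) ^ u" using bk[of i] i by simp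
    also have "\<dots> = (r i' ^ g) ^ u" using e by simp
    also have "\<dots> = r i'" using bk[of i'] i' by simp
    finally have "r i = r i'" .
    then have "pick I i = pick I i'" unfolding r_def using dist pickn i i' n_def
      by (simp add: nth_eq_iff_index_eq)
    show "i = i'"
    proof (rule ccontr)
      assume "i \<noteq> i'"
      then consider "i < i'" | "i' < i" by linarith
      then show False
      proof cases
        case 1 then have "pick I i < pick I i'" using pick_mono_le[of i' I i] i' cI by simp
        then show False using \<open>pick I i = pick I i'\<close> by simp
      next
        case 2 then have "pick I i' < pick I i" using pick_mono_le[of i I i'] i cI by simp
        then show False using \<open>pick I i = pick I i'\<close> by simp
      qed
    qed
  qed
  have "det S \<noteq> 0" by (rule det_scaled_vandermonde[OF Sc Sij c0 inj])
  then show "invertible_mat (submatrix (vmat \<rho> es) I J)"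
    using det_ne0_invertible[OF Sc] unfolding S_def by simp
qed

locale catx =
  fixes K L T x :: nat
  assumes LK: "L \<le> K" and TL: "T \<le> L" and T2: "2 \<le> T" and x0: "0 < x"
    and cop: "coprime x (cat_q K L T)"
begin

definition "t = T - 1"
definition "ka = cat_kappa K T"
definition "la = cat_lambda L T"
definition "A = cat_Kstar K T"
definition "B = cat_Lstar L T"
definition "q = cat_q K L T"
definition "y = cat_y K L T x"

lemma t1: "1 \<le> t" using T2 by (simp add: t_def)
lemma A_eq: "A = K + 1 + ka" by (simp add: A_def ka_def cat_Kstar_def)
lemma B_eq: "B = L + 1 + la" by (simp add: B_def la_def cat_Lstar_def)
lemma q_eq: "q = A * B + t^2" by (simp add: q_def A_def B_def t_def cat_q_def)

lemma ka: "coprime A t" "ka < t"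
  using least_coprime_bound[OF t1, of K]
  by (simp_all add: A_eq ka_def cat_kappa_def t_def)
lemma la: "coprime B t" "la < t"
  using least_coprime_bound[OF t1, of L]
  by (simp_all add: B_eq la_def cat_lambda_def t_def)

lemma q_pos: "0 < q" using q_eq A_eq B_eq by simp

lemma cop_t_q: "coprime t q"
proof -
  have "[t^2 + A * B = A * B] (mod t)" by (simp add: cong_def power2_eq_square)
  moreover have "coprime (A * B) t" using ka la by simp
  ultimately have "coprime (t^2 + A*B) t" using cong_imp_coprime cong_sym by blast
  then show ?thesis using q_eq by (simp add: coprime_commute add.commute)
qed

lemma cop_A_q: "coprime A q"
proof -
  have "[A * B + t^2 = t^2] (mod A)" by (simp add: cong_def)
  moreover have "coprime (t^2) A" using ka by (simp add: coprime_commute)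
  ultimately have "coprime (A * B + t^2) A" using cong_imp_coprime cong_sym by blast
  then show ?thesis using q_eq by (simp add: coprime_commute)
qed

lemma cop_x_q: "coprime x q" using cop by (simp add: q_def)

lemma y_prop: "y < q \<and> [x * t + y * A = 0] (mod q)"
proof -
  have c: "coprime (int A) (int q)" using cop_A_q by simp
  obtain u where u: "[int A * u = 1] (mod int q)" using cong_solve_coprime_int[OF c] by blast
  define y' where "y' = (- (int x * int t * u)) mod int q"
  have y'0: "0 \<le> y'" "y' < int q" using q_pos unfolding y'_def by simp_all
  have dv: "int q dvd (1 - int A * u)" using u
    by (metis cong_iff_dvd_diff cong_sym)
  have e: "y' = - (int x * int t * u) - int q * ((- (int x * int t * u)) div int q)"
    unfolding y'_def by (simp add: minus_div_mult_eq_mod[symmetric] mult.commute)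
  have "int x * int t + y' * int A
      = int x * int t * (1 - int A * u) - int q * ((- (int x * int t * u)) div int q) * int A"
    by (subst e) (simp add: algebra_simps)
  also have "int q dvd \<dots>" using dv by (intro dvd_diff) simp_all
  finally have "[int x * int t + y' * int A = 0] (mod int q)" by (simp add: cong_0_iff)
  then have "[int (x * t + nat y' * A) = int 0] (mod int q)" using y'0 by simp
  then have "[x * t + nat y' * A = 0] (mod q)" by (simp only: cong_int_iff)
  moreover have "nat y' < q" using y'0 by simp
  ultimately have ex: "nat y' < q \<and> [x * t + nat y' * A = 0] (mod q)" by simp
  have uniq: "y1 = nat y'" if "y1 < q \<and> [x * t + y1 * A = 0] (mod q)" for y1
  proof -
    have "[x * t + y1 * A = x * t + nat y' * A] (mod q)" using that ex
      by (meson cong_sym cong_trans)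
    then have "[y1 * A = nat y' * A] (mod q)" by (simp add: cong_add_lcancel_nat)
    then have "[y1 = nat y'] (mod q)" using cop_A_q by (simp add: cong_mult_rcancel_nat)
    then show ?thesis using that ex cong_less_modulus_unique_nat by blast
  qed
  have "y = nat y'" unfolding y_def cat_y_def
  proof (rule the_equality)
    show "nat y' < cat_q K L T \<and> [x * (T - 1) + nat y' * cat_Kstar K T = 0] (mod cat_q K L T)"
      using ex unfolding q_def t_def A_def .
    fix y1 assume "y1 < cat_q K L T \<and> [x * (T - 1) + y1 * cat_Kstar K T = 0] (mod cat_q K L T)"
    then show "y1 = nat y'" using uniq unfolding q_def t_def A_def by blast
  qed
  then show ?thesis using ex by simp
qed

end

lemma mult_ge_self_int: fixes m a :: int shows "0 \<le> a \<Longrightarrow> 1 \<le> m \<Longrightarrow> a \<le> m * a"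
  using mult_right_mono[of 1 m a] by simp
lemma mult_ge_2_int: fixes m a :: int shows "0 \<le> a \<Longrightarrow> 2 \<le> m \<Longrightarrow> 2 * a \<le> m * a"
  using mult_right_mono[of 2 m a] by simp

context catx begin

lemma A_ge: "t + 2 \<le> A" using A_eq LK TL T2 by (simp add: t_def)
lemma B_ge: "t + 2 \<le> B" using B_eq TL T2 by (simp add: t_def)

lemma E1: "int q dvd (int x * int t + int y * int A)"
proof -
  have "[x * t + y * A = 0] (mod q)" using y_prop by simp
  then have "q dvd (x * t + y * A)" by (simp add: cong_0_iff)
  then show ?thesis by (metis of_nat_add of_nat_dvd_iff of_nat_mult)
qed

lemma E2: "int q dvd (int B * int x - int t * int y)"
proof -
  have "int t * (int B * int x - int t * int y) = int B * (int x * int t + int y * int A) - int q * int y"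
    by (simp add: q_eq algebra_simps power2_eq_square)
  also have "int q dvd \<dots>" using E1 by (intro dvd_diff) simp_all
  finally have "int q dvd int t * (int B * int x - int t * int y)" .
  moreover have "coprime (int q) (int t)" using cop_t_q by (simp add: coprime_commute)
  ultimately show ?thesis using coprime_dvd_mult_right_iff by blast
qed

lemma cop_xq_int: "coprime (int x) (int q)" using cop_x_q by simp

lemma cop_y_q: "coprime (int y) (int q)"
proof (rule coprimeI)
  fix c assume cy: "c dvd int y" and cq: "c dvd int q"
  have "c dvd int x * int t"
  proof -
    have "c dvd (int x * int t + int y * int A)" using E1 cq dvd_trans by blast
    moreover have "c dvd int y * int A" using cy by simp
    ultimately have "c dvd (int x * int t + int y * int A) - int y * int A" by (rule dvd_diff)
    then show ?thesis by simp
  qed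
  moreover have "coprime c (int x)" using cop_xq_int cq
    by (meson coprime_commute coprime_imp_coprime dvd_trans)
  ultimately have "c dvd int t" using coprime_dvd_mult_right_iff by blast
  moreover have "coprime (int t) (int q)" using cop_t_q by simp
  ultimately show "is_unit c" using cq by (meson coprime_common_divisor)
qed

lemma collide:
  fixes da db :: int
  assumes dv: "int q dvd (da * int y + db * int x)"
    and ba: "\<bar>da\<bar> \<le> int A + int t - 1" and bb: "\<bar>db\<bar> \<le> int B + int t - 1"
  shows "(da = 0 \<and> db = 0) \<or> (da = int A \<and> db = int t) \<or> (da = - int A \<and> db = - int t)
       \<or> (da = - int t \<and> db = int B) \<or> (da = int t \<and> db = - int B)"
proof -
  define Q where "Q = int q"
  have h1: "Q dvd (db * int A - da * int t)"
  proof -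
    have "int x * (db * int A - da * int t) = int A * (da * int y + db * int x) - da * (int x * int t + int y * int A)"
      by (simp add: algebra_simps)
    also have "Q dvd \<dots>" using dv E1 unfolding Q_def by (intro dvd_diff) simp_all
    finally have "Q dvd int x * (db * int A - da * int t)" .
    then show ?thesis using cop_xq_int unfolding Q_def
      by (metis coprime_commute coprime_dvd_mult_right_iff)
  qed
  have h2: "Q dvd (da * int B + db * int t)"
  proof -
    have "int x * (da * int B + db * int t) = da * (int B * int x - int t * int y) + int t * (da * int y + db * int x)"
      by (simp add: algebra_simps)
    also have "Q dvd \<dots>" using dv E2 unfolding Q_def by (intro dvd_add) simp_all
    finally have "Q dvd int x * (da * int B + db * int t)" .
    then show ?thesis using cop_xq_int unfolding Q_def
      by (metis coprime_commute coprime_dvd_mult_right_iff)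
  qed
  obtain m where m: "da * int B + db * int t = Q * m" using h2 by (elim dvdE)
  obtain n where n: "db * int A - da * int t = Q * n" using h1 by (elim dvdE)
  have Qe: "Q = int A * int B + int t * int t" unfolding Q_def q_eq by (simp add: power2_eq_square)
  have Q0: "Q \<noteq> 0" using q_pos unfolding Q_def by simp
  have "Q * da = Q * (m * int A - n * int t)"
  proof -
    have "Q * da = int A * (da * int B + db * int t) - int t * (db * int A - da * int t)"
      unfolding Qe by (simp add: algebra_simps)
    also have "\<dots> = Q * (m * int A - n * int t)" unfolding m n by (simp add: algebra_simps)
    finally show ?thesis .
  qed
  then have da: "da = m * int A - n * int t" using Q0 by simp
  have "Q * db = Q * (m * int t + n * int B)"
  proof -
    have "Q * db = int t * (da * int B + db * int t) + int B * (db * int A - da * int t)"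
      unfolding Qe by (simp add: algebra_simps)
    also have "\<dots> = Q * (m * int t + n * int B)" unfolding m n by (simp add: algebra_simps)
    finally show ?thesis .
  qed
  then have db: "db = m * int t + n * int B" using Q0 by simp
  have At: "int t + 2 \<le> int A" "int t + 2 \<le> int B" "1 \<le> int t" using A_ge B_ge t1 by simp_all
  have c1: "int A \<le> m * int A" "int t \<le> m * int t" if "1 \<le> m"
    using mult_ge_self_int[OF _ that] by simp_all
  have c1': "int B \<le> n * int B" "int t \<le> n * int t" if "1 \<le> n"
    using mult_ge_self_int[OF _ that] by simp_all
  have c2: "int A \<le> - (m * int A)" "int t \<le> - (m * int t)" if "m \<le> -1"
    using mult_ge_self_int[of _ "-m"] that by simp_all
  have c2': "int B \<le> - (n * int B)" "int t \<le> - (n * int t)" if "n \<le> -1"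
    using mult_ge_self_int[of _ "-n"] that by simp_all
  have d1: "2 * int A \<le> m * int A" if "2 \<le> m" using mult_ge_2_int[OF _ that] by simp
  have d2: "2 * int A \<le> - (m * int A)" if "m \<le> -2" using mult_ge_2_int[of _ "-m"] that by simp
  have d1': "2 * int B \<le> n * int B" if "2 \<le> n" using mult_ge_2_int[OF _ that] by simp
  have d2': "2 * int B \<le> - (n * int B)" if "n \<le> -2" using mult_ge_2_int[of _ "-n"] that by simp
  have ba': "da \<le> int A + int t - 1" "- da \<le> int A + int t - 1" using ba by linarith+
  have bb': "db \<le> int B + int t - 1" "- db \<le> int B + int t - 1" using bb by linarith+
  note F = ba' bb' At da db
  consider "m = 0" | "m = 1" | "m = -1" | "2 \<le> m" | "m \<le> -2" by linarith
  then show ?thesis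
  proof cases
    case 1
    have dd: "da = -(n * int t)" "db = n * int B" using da db 1 by simp_all
    note F = F dd
    consider "n = 0" | "n = 1" | "n = -1" | "2 \<le> n" | "n \<le> -2" by linarith
    then show ?thesis
    proof cases
      case 4 show ?thesis by (rule FalseE) (use d1'[OF 4] 1 F in linarith)
    next
      case 5 show ?thesis by (rule FalseE) (use d2'[OF 5] 1 F in linarith)
    qed (use 1 da db in auto)
  next
    case 2
    have dd: "da = int A - n * int t" "db = int t + n * int B" using da db 2 by simp_all
    note F = F dd
    consider "n = 0" | "1 \<le> n" | "n \<le> -1" by linarith
    then show ?thesis
    proof cases
      case 2 show ?thesis by (rule FalseE) (use c1'[OF 2] \<open>m = 1\<close> F in linarith)
    next
      case 3 show ?thesis by (rule FalseE) (use c2'[OF 3] \<open>m = 1\<close> F in linarith)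
    qed (use 2 da db in auto)
  next
    case 3
    have dd: "da = - int A - n * int t" "db = - int t + n * int B" using da db 3 by simp_all
    note F = F dd
    consider "n = 0" | "1 \<le> n" | "n \<le> -1" by linarith
    then show ?thesis
    proof cases
      case 2 show ?thesis by (rule FalseE) (use c1'[OF 2] \<open>m = -1\<close> F in linarith)
    next
      case 3 show ?thesis by (rule FalseE) (use c2'[OF 3] \<open>m = -1\<close> F in linarith)
    qed (use 3 da db in auto)
  next
    case 4
    have m1: "1 \<le> m" using 4 by simp
    consider "n = 0" | "1 \<le> n" | "n \<le> -1" by linarith
    then show ?thesis
    proof cases
      case 1
      have dm: "da = m * int A" using da 1 by simp
      show ?thesis by (rule FalseE) (use dm d1[OF \<open>2 \<le> m\<close>] F in linarith)
    next
      case 2 show ?thesis by (rule FalseE) (use c1[OF m1] c1'[OF 2] F in linarith)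
    next
      case 3 show ?thesis by (rule FalseE) (use c1[OF m1] c2'[OF 3] F in linarith)
    qed
  next
    case 5
    have m1: "m \<le> -1" using 5 by simp
    consider "n = 0" | "1 \<le> n" | "n \<le> -1" by linarith
    then show ?thesis
    proof cases
      case 1
      have dm: "da = m * int A" using da 1 by simp
      show ?thesis by (rule FalseE) (use dm d2[OF \<open>m \<le> -2\<close>] F in linarith)
    next
      case 2 show ?thesis by (rule FalseE) (use c2[OF m1] c1'[OF 2] F in linarith)
    next
      case 3 show ?thesis by (rule FalseE) (use c2[OF m1] c2'[OF 3] F in linarith)
    qed
  qed
qed

end

definition psum :: "(int \<times> int) \<times> (int \<times> int) \<Rightarrow> int \<times> int" where
  "psum PQ = (fst (fst PQ) + fst (snd PQ), snd (fst PQ) + snd (snd PQ))"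

lemma interval_plus_int:
  fixes a1 a2 c1 c2 :: int
  assumes "a1 \<le> a2" "c1 \<le> c2"
  shows "{u + v |u v. u \<in> {a1..a2} \<and> v \<in> {c1..c2}} = {a1 + c1..a2 + c2}"
proof (intro equalityI subsetI)
  fix s assume "s \<in> {a1 + c1..a2 + c2}"
  then have s: "a1 + c1 \<le> s" "s \<le> a2 + c2" by auto
  define u where "u = max a1 (s - c2)"
  have "u \<in> {a1..a2}" "s - u \<in> {c1..c2}" using s assms unfolding u_def by auto
  then show "s \<in> {u + v |u v. u \<in> {a1..a2} \<and> v \<in> {c1..c2}}"
    by (intro CollectI exI[of _ u] exI[of _ "s - u"]) auto
qed auto

lemma box_plus:
  fixes a1 a2 b1 b2 c1 c2 d1 d2 :: int
  assumes "a1 \<le> a2" "b1 \<le> b2" "c1 \<le> c2" "d1 \<le> d2"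
  shows "psum ` (({a1..a2} \<times> {b1..b2}) \<times> ({c1..c2} \<times> {d1..d2})) = {a1+c1..a2+c2} \<times> {b1+d1..b2+d2}"
proof (intro equalityI subsetI)
  fix z assume "z \<in> psum ` (({a1..a2} \<times> {b1..b2}) \<times> ({c1..c2} \<times> {d1..d2}))"
  then obtain u u' v v' where "u \<in> {a1..a2}" "u' \<in> {b1..b2}" "v \<in> {c1..c2}" "v' \<in> {d1..d2}"
    "z = psum ((u, u'), (v, v'))" by blast
  then show "z \<in> {a1+c1..a2+c2} \<times> {b1+d1..b2+d2}" unfolding psum_def by simp
next
  fix z assume z: "z \<in> {a1+c1..a2+c2} \<times> {b1+d1..b2+d2}"
  have "fst z \<in> {a1+c1..a2+c2}" using z by (cases z) simp
  then have "fst z \<in> {u + v |u v. u \<in> {a1..a2} \<and> v \<in> {c1..c2}}"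
    unfolding interval_plus_int[OF assms(1,3)] .
  then obtain u v where uv: "u \<in> {a1..a2}" "v \<in> {c1..c2}" "fst z = u + v" by blast
  have "snd z \<in> {b1+d1..b2+d2}" using z by (cases z) simp
  then have "snd z \<in> {u + v |u v. u \<in> {b1..b2} \<and> v \<in> {d1..d2}}"
    unfolding interval_plus_int[OF assms(2,4)] .
  then obtain u' v' where uv': "u' \<in> {b1..b2}" "v' \<in> {d1..d2}" "snd z = u' + v'" by blast
  have "z = psum ((u, u'), (v, v'))" using uv uv' by (simp add: psum_def prod_eq_iff)
  moreover have "((u, u'), (v, v')) \<in> ({a1..a2} \<times> {b1..b2}) \<times> ({c1..c2} \<times> {d1..d2})"
    using uv uv' by simp
  ultimately show "z \<in> psum ` (({a1..a2} \<times> {b1..b2}) \<times> ({c1..c2} \<times> {d1..d2}))" by blast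
qed

lemma box_row_image: fixes c :: int shows "{0..int n - 1} \<times> {c..c} = (\<lambda>i. (int i, c)) ` {0..<n}"
  by (auto intro!: image_eqI [where x = "nat x" for x])
lemma box_col_image: fixes c :: int shows "{c..c} \<times> {0..int n - 1} = (\<lambda>i. (c, int i)) ` {0..<n}"
  by (auto intro!: image_eqI [where x = "nat x" for x])

context catx begin

definition F :: "int \<times> int \<Rightarrow> nat" where
  "F P = nat ((fst P * int y + snd P * int x) mod int q)"

lemma F_lt: "F P < q" using q_pos unfolding F_def
  by (simp add: nat_less_iff)

lemma F_int: "int (F P) = (fst P * int y + snd P * int x) mod int q"
  using q_pos unfolding F_def by simp

lemma F_eq_iff: "F P = F P' \<longleftrightarrow> int q dvd ((fst P' - fst P) * int y + (snd P' - snd P) * int x)"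
proof -
  have "F P = F P' \<longleftrightarrow> int (F P) = int (F P')" by simp
  also have "\<dots> \<longleftrightarrow> (fst P * int y + snd P * int x) mod int q = (fst P' * int y + snd P' * int x) mod int q"
    unfolding F_int ..
  also have "\<dots> \<longleftrightarrow> int q dvd ((fst P' * int y + snd P' * int x) - (fst P * int y + snd P * int x))"
    by (metis mod_eq_dvd_iff)
  finally show ?thesis by (simp add: algebra_simps)
qed

lemma F_shift1: "F (a + int A, b + int t) = F (a, b)"
proof -
  have "F (a, b) = F (a + int A, b + int t)" unfolding F_eq_iff using E1 by (simp add: algebra_simps)
  then show ?thesis by simp
qed

lemma F_shift2: "F (a - int t, b + int B) = F (a, b)"
proof -
  have "F (a, b) = F (a - int t, b + int B)" unfolding F_eq_iff using E2 by (simp add: algebra_simps)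
  then show ?thesis by simp
qed

definition "Box0 = {0..int K + int t} \<times> {-1..int L + int t - 1}"

lemma collide_F:
  assumes P: "P \<in> Box0" and P': "P' \<in> Box0" and e: "F P = F P'"
  shows "P' = P \<or> P' = (fst P + int A, snd P + int t) \<or> P' = (fst P - int A, snd P - int t)
    \<or> P' = (fst P - int t, snd P + int B) \<or> P' = (fst P + int t, snd P - int B)"
proof -
  obtain a b a' b' where ab: "P = (a, b)" "P' = (a', b')" by (cases P, cases P') auto
  have d: "int q dvd ((a' - a) * int y + (b' - b) * int x)" using e F_eq_iff ab by auto
  have ba: "\<bar>a' - a\<bar> \<le> int A + int t - 1" using P P' A_eq ab unfolding Box0_def by auto
  have bb: "\<bar>b' - b\<bar> \<le> int B + int t - 1" using P P' B_eq ab unfolding Box0_def by auto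
  from collide[OF d ba bb] show ?thesis
  proof (elim disjE conjE)
    assume "a' - a = 0" "b' - b = 0" then show ?thesis using ab by simp
  next
    assume "a' - a = int A" "b' - b = int t"
    then have "P' = (fst P + int A, snd P + int t)" using ab by simp
    then show ?thesis by blast
  next
    assume "a' - a = - int A" "b' - b = - int t"
    then have "P' = (fst P - int A, snd P - int t)" using ab by simp
    then show ?thesis by blast
  next
    assume "a' - a = - int t" "b' - b = int B"
    then have "P' = (fst P - int t, snd P + int B)" using ab by simp
    then show ?thesis by blast
  next
    assume "a' - a = int t" "b' - b = - int B"
    then have "P' = (fst P + int t, snd P - int B)" using ab by simp
    then show ?thesis by blast
  qed
qed

lemma F_sum: "(F P + F P') mod q = F (psum (P, P'))"
proof -
  have "int ((F P + F P') mod q) = (int (F P) + int (F P')) mod int q" by (simp add: of_nat_mod)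
  also have "\<dots> = ((fst P * int y + snd P * int x) + (fst P' * int y + snd P' * int x)) mod int q"
    unfolding F_int by (simp add: mod_add_eq)
  also have "\<dots> = int (F (psum (P, P')))" unfolding F_int psum_def by (simp add: algebra_simps)
  finally show ?thesis by simp
qed

lemma sumset_F: "sumset_mod q (F ` X) (F ` Y) = F ` (psum ` (X \<times> Y))"
  unfolding sumset_mod_def
  by (auto simp: F_sum image_iff) (metis F_sum)

lemma t_int: "int t = int T - 1" using T2 by (simp add: t_def)

lemma set_ap: "set (cat_alpha_p K L T x) = F ` ({0..int K - 1} \<times> {0..0})"
proof -
  have "F (int i, 0) = (i * y) mod q" for i unfolding F_def
    by (simp add: nat_mod_as_int)
  then show ?thesis unfolding cat_alpha_p_def box_row_image image_image
    by (simp add: y_def q_def)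
qed

lemma set_as: "set (cat_alpha_s K L T x) = F ` ({int K..int K} \<times> {0..int t})"
proof -
  have "F (int K, int i) = (K * y + i * x) mod q" for i unfolding F_def
    by (simp add: nat_mod_as_int)
  then show ?thesis unfolding cat_alpha_s_def t_int box_col_image image_image
    by (simp add: y_def q_def)
qed

lemma set_bp: "set (cat_beta_p K L T x) = F ` ({0..0} \<times> {0..int L - 1})"
proof -
  have "F (0, int i) = (i * x) mod q" for i unfolding F_def
    by (simp add: nat_mod_as_int)
  then show ?thesis unfolding cat_beta_p_def box_col_image image_image
    by (simp add: y_def q_def)
qed

lemma set_bs: "set (cat_beta_s K L T x) = F ` ({0..int t} \<times> {-1..-1})"
proof -
  have "F (int i, -1) = nat ((int i * int y - int x) mod int q)" for i unfolding F_def
    by simp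
  then show ?thesis unfolding cat_beta_s_def t_int box_row_image image_image
    by (simp add: y_def q_def)
qed

abbreviation "ap \<equiv> cat_alpha_p K L T x"
abbreviation "as \<equiv> cat_alpha_s K L T x"
abbreviation "bp \<equiv> cat_beta_p K L T x"
abbreviation "bs \<equiv> cat_beta_s K L T x"
abbreviation "qq \<equiv> cat_q K L T"

lemma K1: "1 \<le> K" and L1: "1 \<le> L" using LK TL T2 by auto

lemma TL_eq: "cat_TL qq ap as bp bs = F ` ({0..int K - 1} \<times> {0..int L - 1})"
  unfolding cat_TL_def q_def[symmetric] set_ap set_bp sumset_F
  using box_plus[of 0 "int K - 1" 0 0 0 0 0 "int L - 1"] K1 L1 by simp

lemma TR_eq: "cat_TR qq ap as bp bs = F ` ({0..int K + int t - 1} \<times> {-1..-1})"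
  unfolding cat_TR_def q_def[symmetric] set_ap set_bs sumset_F
  using box_plus[of 0 "int K - 1" 0 0 0 "int t" "-1" "-1"] K1 t1 by (simp add: algebra_simps)

lemma BL_eq: "cat_BL qq ap as bp bs = F ` ({int K..int K} \<times> {0..int L + int t - 1})"
  unfolding cat_BL_def q_def[symmetric] set_as set_bp sumset_F
  using box_plus[of "int K" "int K" 0 "int t" 0 0 0 "int L - 1"] L1 t1 by (simp add: algebra_simps)

lemma BR_eq: "cat_BR qq ap as bp bs = F ` ({int K..int K + int t} \<times> {-1..int t - 1})"
  unfolding cat_BR_def q_def[symmetric] set_as set_bs sumset_F
  using box_plus[of "int K" "int K" 0 "int t" 0 "int t" "-1" "-1"] t1 by (simp add: algebra_simps)

end

context catx begin

definition "R1 = {0..int K - 1} \<times> {0..int L - 1}"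
definition "R2 = {0..int K + int t - 1} \<times> {-1..-1::int}"
definition "R3 = {int K..int K} \<times> {0..int L + int t - 1}"
definition "R4 = {int K + 1..int K + int t - 1} \<times> {0..int t - 2}"
definition "R5 = {int K + 1..int K + int ka} \<times> {int t - 1..int t - 1}"
definition "R6 = {int K + int t..int K + int t} \<times> {int t - 1 - int la..int t - 2}"
definition "RBR = {int K..int K + int t} \<times> {-1..int t - 1}"
definition "Rp = R1 \<union> R2 \<union> R3 \<union> R4 \<union> R5 \<union> R6"
definition "Rall = R1 \<union> R2 \<union> R3 \<union> RBR"

lemma arith_facts: "int ka \<le> int t - 1" "int la \<le> int t - 1" "1 \<le> int t"
  "int t + 1 \<le> int L" "int L \<le> int K" "int A = int K + 1 + int ka" "int B = int L + 1 + int la"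
  using ka la t1 TL LK T2 A_eq B_eq by (auto simp: t_def)

lemma noshift1: "P \<in> Rp \<Longrightarrow> (fst P + int A, snd P + int t) \<notin> Rp"
  using arith_facts unfolding Rp_def R1_def R2_def R3_def R4_def R5_def R6_def
  by (cases P) auto

lemma noshift2: "P \<in> Rp \<Longrightarrow> (fst P - int t, snd P + int B) \<notin> Rp"
  using arith_facts unfolding Rp_def R1_def R2_def R3_def R4_def R5_def R6_def
  by (cases P) auto

lemma Rp_Box0: "Rp \<subseteq> Box0"
  using arith_facts unfolding Rp_def R1_def R2_def R3_def R4_def R5_def R6_def Box0_def
  by auto

lemma Rall_Box0: "Rall \<subseteq> Box0"
  using arith_facts unfolding Rall_def R1_def R2_def R3_def RBR_def Box0_def
  by auto

lemma inj_Rp: "inj_on F Rp"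
proof (rule inj_onI)
  fix P P' assume P: "P \<in> Rp" and P': "P' \<in> Rp" and e: "F P = F P'"
  from collide_F[OF subsetD[OF Rp_Box0 P] subsetD[OF Rp_Box0 P'] e]
  show "P = P'"
  proof (elim disjE)
    assume "P' = (fst P + int A, snd P + int t)" then show ?thesis using noshift1[OF P] P' by simp
  next
    assume "P' = (fst P - int A, snd P - int t)"
    then have "P = (fst P' + int A, snd P' + int t)" by auto
    then show ?thesis using noshift1[OF P'] P by simp
  next
    assume "P' = (fst P - int t, snd P + int B)" then show ?thesis using noshift2[OF P] P' by simp
  next
    assume "P' = (fst P + int t, snd P - int B)"
    then have "P = (fst P' - int t, snd P' + int B)" by auto
    then show ?thesis using noshift2[OF P'] P by simp
  qed simp
qed

lemma Rp_sub: "Rp \<subseteq> Rall"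
  using arith_facts unfolding Rp_def Rall_def R1_def R2_def R3_def R4_def R5_def R6_def RBR_def
  by auto

lemma Rall_rep: "P \<in> Rall \<Longrightarrow> \<exists>P'\<in>Rp. F P = F P'"
proof -
  assume P: "P \<in> Rall"
  obtain a b where ab: "P = (a, b)" by (cases P)
  show ?thesis
  proof (cases "P \<in> Rp")
    case True then show ?thesis by blast
  next
    case False
    then have inBR: "P \<in> RBR" using P unfolding Rall_def Rp_def by blast
    then have hK: "int K \<le> a" "a \<le> int K + int t" "-1 \<le> b" "b \<le> int t - 1"
      unfolding ab RBR_def by auto
    note AF = arith_facts
    show ?thesis
    proof (cases "b = int t - 1 \<and> int K + 1 + int ka \<le> a")
      case True
      define P' where "P' = (a - int A, b - int t)"
      have e: "F P = F P'" unfolding P'_def ab using F_shift1[of "a - int A" "b - int t"] by simp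
      have "P' \<in> R2" using True hK AF unfolding P'_def R2_def by auto
      then have "P' \<in> Rp" unfolding Rp_def by blast
      then show ?thesis using e by (intro bexI[of _ P']) simp_all
    next
      case n1: False
      show ?thesis
      proof (cases "a = int K + int t \<and> b \<le> int t - 2 - int la")
        case True
        define P' where "P' = (a - int t, b + int B)"
        have e: "F P = F P'" unfolding P'_def ab using F_shift2[of a b] by simp
        have "P' \<in> R3" using True hK AF unfolding P'_def R3_def by auto
        then have "P' \<in> Rp" unfolding Rp_def by blast
        then show ?thesis using e by (intro bexI[of _ P']) simp_all
      next
        case n2: False
        have "P \<in> Rp"
        proof -
          consider "b = -1" | "a = int K" "0 \<le> b" | "int K + 1 \<le> a" "a \<le> int K + int t - 1" "0 \<le> b" "b \<le> int t - 2"
            | "b = int t - 1" "int K + 1 \<le> a" | "a = int K + int t" "0 \<le> b" "b \<le> int t - 2"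
            using hK by linarith
          then show ?thesis
          proof cases
            case 1
            have "b \<le> int t - 2 - int la" using 1 AF by linarith
            then have "a \<noteq> int K + int t" using n2 by blast
            then have "a \<le> int K + int t - 1" using hK by linarith
            then have "P \<in> R2" using 1 hK unfolding ab R2_def by auto
            then show ?thesis unfolding Rp_def by blast
          next
            case 2
            then have "P \<in> R3" using hK AF unfolding ab R3_def by auto
            then show ?thesis unfolding Rp_def by blast
          next
            case 3
            then have "P \<in> R4" unfolding ab R4_def by auto
            then show ?thesis unfolding Rp_def by blast
          next
            case 4
            then have "a \<le> int K + int ka" using n1 by auto
            then have "P \<in> R5" using 4 unfolding ab R5_def by auto
            then show ?thesis unfolding Rp_def by blast
          next
            case 5
            then have "int t - 1 - int la \<le> b" using n2 by auto
            then have "P \<in> R6" using 5 unfolding ab R6_def by auto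
            then show ?thesis unfolding Rp_def by blast
          qed
        qed
        then show ?thesis using False by blast
      qed
    qed
  qed
qed

lemma F_Rall: "F ` Rall = F ` Rp"
  using Rall_rep Rp_sub by (auto simp: image_iff)

lemma card_box: "card ({a..b} \<times> {c..d::int}) = nat (b - a + 1) * nat (d - c + 1)"
  by (simp add: card_cartesian_product)

lemma card_Rp: "card Rp = (K + 1) * (L + 1) + t^2 + ka + la"
proof -
  note AF = arith_facts
  have fin: "finite R1" "finite R2" "finite R3" "finite R4" "finite R5" "finite R6"
    unfolding R1_def R2_def R3_def R4_def R5_def R6_def by auto
  have d1: "R1 \<inter> R2 = {}" unfolding R1_def R2_def by auto
  have d2: "(R1 \<union> R2) \<inter> R3 = {}" unfolding R1_def R2_def R3_def by auto
  have d3: "(R1 \<union> R2 \<union> R3) \<inter> R4 = {}" unfolding R1_def R2_def R3_def R4_def by auto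
  have d4: "(R1 \<union> R2 \<union> R3 \<union> R4) \<inter> R5 = {}" using AF unfolding R1_def R2_def R3_def R4_def R5_def by auto
  have d5: "(R1 \<union> R2 \<union> R3 \<union> R4 \<union> R5) \<inter> R6 = {}" using AF unfolding R1_def R2_def R3_def R4_def R5_def R6_def by auto
  have "card Rp = card R1 + card R2 + card R3 + card R4 + card R5 + card R6"
    unfolding Rp_def using fin d1 d2 d3 d4 d5 by (simp add: card_Un_disjoint)
  also have "\<dots> = K * L + (K + t) + (L + t) + (t - 1) * (t - 1) + ka + la"
  proof -
    have "card R1 = K * L" unfolding R1_def card_box by (simp add: nat_mult_distrib)
    moreover have "card R2 = K + t" unfolding R2_def card_box by simp
    moreover have "card R3 = L + t" unfolding R3_def card_box by simp
    moreover have "card R4 = (t - 1) * (t - 1)" unfolding R4_def card_box using t1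
      by (simp add: nat_diff_distrib)
    moreover have "card R5 = ka" unfolding R5_def card_box by simp
    moreover have "card R6 = la" unfolding R6_def card_box by simp
    ultimately show ?thesis by simp
  qed
  also have "\<dots> = (K + 1) * (L + 1) + t^2 + ka + la"
  proof -
    obtain s where s: "t = Suc s" using t1 by (cases t) auto
    show ?thesis unfolding s by (simp add: algebra_simps power2_eq_square)
  qed
  finally show ?thesis .
qed

lemma TL_disj:
  assumes P: "P \<in> R1" and P': "P' \<in> R2 \<union> R3 \<union> RBR"
  shows "F P \<noteq> F P'"
proof
  assume e: "F P = F P'"
  have PB: "P \<in> Box0" "P' \<in> Box0" using P P' Rall_Box0 unfolding Rall_def by auto
  obtain a b where ab: "P = (a, b)" by (cases P)
  note AF = arith_facts
  have ha: "0 \<le> a" "a \<le> int K - 1" "0 \<le> b" "b \<le> int L - 1" using P unfolding ab R1_def by auto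
  from collide_F[OF PB e] show False
  proof (elim disjE)
    assume "P' = P" then show False using P P' unfolding R1_def R2_def R3_def RBR_def by auto
  next
    assume "P' = (fst P + int A, snd P + int t)"
    then show False using P' ha AF unfolding ab R2_def R3_def RBR_def by auto
  next
    assume "P' = (fst P - int A, snd P - int t)"
    then show False using P' ha AF unfolding ab R2_def R3_def RBR_def by auto
  next
    assume "P' = (fst P - int t, snd P + int B)"
    then show False using P' ha AF unfolding ab R2_def R3_def RBR_def by auto
  next
    assume "P' = (fst P + int t, snd P - int B)"
    then show False using P' ha AF unfolding ab R2_def R3_def RBR_def by auto
  qed
qed

end

context catx begin

lemma cat_all_eq: "cat_all qq ap as bp bs = F ` Rp"
  unfolding cat_all_def TL_eq TR_eq BL_eq BR_eq F_Rall[symmetric] Rall_def R1_def R2_def R3_def RBR_def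
  by (simp add: image_Un)

lemma card_all: "card (cat_all qq ap as bp bs) = (K + 1) * (L + 1) + (T - 1)^2 + cat_kappa K T + cat_lambda L T"
  unfolding cat_all_eq card_image[OF inj_Rp] card_Rp t_def ka_def la_def ..

lemma R1_Rp: "R1 \<subseteq> Rp" unfolding Rp_def by blast

theorem I_III: "cat_cond_I_III qq ap as bp bs K L T ((K + 1) * (L + 1) + (T - 1)^2 + cat_kappa K T + cat_lambda L T)"
  unfolding cat_cond_I_III_def
proof (intro conjI)
  show "length ap = K" "length as = T" "length bp = L" "length bs = T"
    by (simp_all add: cat_alpha_p_def cat_alpha_s_def cat_beta_p_def cat_beta_s_def)
  show "\<forall>v\<in>set ap \<union> set as \<union> set bp \<union> set bs. v < qq"
    unfolding set_ap set_as set_bp set_bs using F_lt unfolding q_def by auto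
  show "card (cat_all qq ap as bp bs) = (K + 1) * (L + 1) + (T - 1)^2 + cat_kappa K T + cat_lambda L T"
    by (rule card_all)
  have "card (cat_TL qq ap as bp bs) = card R1"
    unfolding TL_eq R1_def[symmetric] using inj_on_subset[OF inj_Rp R1_Rp] by (rule card_image)
  also have "\<dots> = K * L" unfolding R1_def card_box by (simp add: nat_mult_distrib)
  finally show "card (cat_TL qq ap as bp bs) = K * L" .
  show "cat_TL qq ap as bp bs \<inter> cat_TR qq ap as bp bs = {}"
    unfolding TL_eq TR_eq R1_def[symmetric] R2_def[symmetric] using TL_disj by blast
  show "cat_TL qq ap as bp bs \<inter> cat_BL qq ap as bp bs = {}"
    unfolding TL_eq BL_eq R1_def[symmetric] R3_def[symmetric] using TL_disj by blast
  show "cat_TL qq ap as bp bs \<inter> cat_BR qq ap as bp bs = {}"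
    unfolding TL_eq BR_eq R1_def[symmetric] RBR_def[symmetric] using TL_disj by blast
qed

theorem IV:
  assumes dv: "qq dvd CARD('p::prime_card) - 1"
  shows "cat_cond_IV TYPE('p mod_ring) qq ap as bp bs T ((K + 1) * (L + 1) + (T - 1)^2 + cat_kappa K T + cat_lambda L T)"
proof -
  define Nv where "Nv = (K + 1) * (L + 1) + (T - 1)^2 + cat_kappa K T + cat_lambda L T"
  define \<gamma> where "\<gamma> = cat_gamma qq ap as bp bs"
  have finall: "finite (cat_all qq ap as bp bs)" unfolding cat_all_eq Rp_def R1_def R2_def R3_def R4_def R5_def R6_def by simp
  have gset: "set \<gamma> = cat_all qq ap as bp bs" unfolding \<gamma>_def cat_gamma_def using finall by simp
  have gdist: "distinct \<gamma>" unfolding \<gamma>_def cat_gamma_def by simp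
  have glen: "length \<gamma> = Nv" unfolding \<gamma>_def cat_gamma_def Nv_def using card_all by simp
  have glt: "\<forall>e\<in>set \<gamma>. e < q" unfolding gset cat_all_eq using F_lt by auto
  define U where "U = {u :: 'p mod_ring. u ^ q = 1}"
  have finU: "finite U" by simp
  have qU: "q \<le> card U" unfolding U_def using card_roots_unity_ge[OF q_pos] dv unfolding q_def by simp
  obtain \<rho> :: "'p mod_ring list" where r: "length \<rho> = length \<gamma>" "set \<rho> \<subseteq> U" "det (vmat \<rho> \<gamma>) \<noteq> 0"
    using exists_gen_vandermonde[OF finU gdist] glt qU by fastforce
  have roots: "\<forall>r\<in>set \<rho>. r ^ q = 1" using r(2) unfolding U_def by auto
  have Vc: "vmat \<rho> \<gamma> \<in> carrier_mat Nv Nv" unfolding vmat_def using r(1) glen by simp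
  have inv: "invertible_mat (vmat \<rho> \<gamma>)" by (rule det_ne0_invertible[OF Vc r(3)])
  have dist: "distinct \<rho>"
  proof (rule ccontr)
    assume "\<not> distinct \<rho>"
    then obtain i j where ij: "i < length \<rho>" "j < length \<rho>" "i \<noteq> j" "\<rho> ! i = \<rho> ! j"
      by (metis distinct_conv_nth)
    have "row (vmat \<rho> \<gamma>) i = row (vmat \<rho> \<gamma>) j"
      by (rule eq_vecI) (use ij in \<open>simp_all add: vmat_def\<close>)
    then have "det (vmat \<rho> \<gamma>) = 0"
      using det_identical_rows[OF Vc ij(3)] ij r(1) glen by simp
    then show False using r(3) by simp
  qed
  have tas: "all_TxT_invertible T (vmat \<rho> as)"
  proof (rule txt_inv[OF dist roots q_pos, where ee="K * y" and g=x])
    show "length as = T" by (simp add: cat_alpha_s_def)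
    show "coprime x q" by (rule cop_x_q)
    fix j and r :: "'p mod_ring" assume j: "j < T" and rq: "r ^ q = 1"
    have "as ! j = (K * y + j * x) mod q" using j unfolding cat_alpha_s_def y_def q_def by simp
    then have "r ^ (as ! j) = r ^ (K * y + j * x)" using pow_mod_q[OF rq, of "K * y + j * x"] by simp
    also have "\<dots> = r ^ (K * y) * (r ^ x) ^ j"
      by (simp add: power_add power_mult[symmetric] mult.commute)
    finally show "r ^ (as ! j) = r ^ (K * y) * (r ^ x) ^ j" .
  qed
  have tbs: "all_TxT_invertible T (vmat \<rho> bs)"
  proof (rule txt_inv[OF dist roots q_pos, where ee="nat ((- int x) mod int q)" and g=y])
    show "length bs = T" by (simp add: cat_beta_s_def)
    show "coprime y q" using cop_y_q by simp
    fix j and r :: "'p mod_ring" assume j: "j < T" and rq: "r ^ q = 1"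
    define e0 where "e0 = nat ((- int x) mod int q)"
    have bj: "bs ! j = nat ((int j * int y - int x) mod int q)" using j unfolding cat_beta_s_def y_def q_def by simp
    have "int (bs ! j mod q) = int ((e0 + j * y) mod q)"
    proof -
      have "int (bs ! j mod q) = ((int j * int y - int x) mod int q) mod int q"
        unfolding bj using q_pos by (simp add: of_nat_mod)
      also have "\<dots> = (int j * int y - int x) mod int q" by simp
      also have "\<dots> = ((- int x) mod int q + int j * int y) mod int q"
      proof -
        have "((- int x) mod int q + int j * int y) mod int q = (- int x + int j * int y) mod int q"
          by (rule mod_add_left_eq)
        then show ?thesis by simp
      qed
      also have "\<dots> = int ((e0 + j * y) mod q)" unfolding e0_def using q_pos by (simp add: of_nat_mod)
      finally show ?thesis .
    qed
    then have "bs ! j mod q = (e0 + j * y) mod q" by simp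
    then have "r ^ (bs ! j) = r ^ (e0 + j * y)" using pow_mod_q[OF rq, of "bs ! j"] pow_mod_q[OF rq, of "e0 + j * y"] by simp
    also have "\<dots> = r ^ e0 * (r ^ y) ^ j"
      by (simp add: power_add power_mult[symmetric] mult.commute)
    finally show "r ^ (bs ! j) = r ^ nat ((- int x) mod int q) * (r ^ y) ^ j" unfolding e0_def .
  qed
  show ?thesis unfolding cat_cond_IV_def Nv_def[symmetric]
    using r(1) glen roots inv tas tbs unfolding \<gamma>_def q_def by (intro exI[of _ \<rho>]) auto
qed

end

theorem theorem2:
  fixes K L T x :: nat
  assumes "L \<le> K" and "T \<le> L" and "2 \<le> T"
    and "0 < x" and "coprime x (cat_q K L T)"
    and "cat_q K L T dvd CARD('p::prime_card) - 1"
  defines "N \<equiv> (K + 1) * (L + 1) + (T - 1)^2 + cat_kappa K T + cat_lambda L T"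
  shows "cat_cond_I_III (cat_q K L T) (cat_alpha_p K L T x) (cat_alpha_s K L T x)
            (cat_beta_p K L T x) (cat_beta_s K L T x) K L T N
       \<and> cat_cond_IV TYPE('p mod_ring) (cat_q K L T) (cat_alpha_p K L T x) (cat_alpha_s K L T x)
            (cat_beta_p K L T x) (cat_beta_s K L T x) T N"
proof -
  interpret catx K L T x using assms(1-5) by unfold_locales
  show ?thesis unfolding N_def using I_III IV[OF assms(6)] by simp
qed

end
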